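(* Let $f:[0,\infty)\to\mathbb R$ be convex and non-increasing, and let $g:[0,\infty)\to\mathbb R\cup\{+\infty\}$ be convex and non-increasing. Define $w(x,y)=g\big(\sqrt{(x-y)^2+(f(x)-f(y))^2}\big)$ for $x,y\ge0$. Then for all $0\le x_1\le x_2\le x_3\le x_4$, $w(x_1,x_3)+w(x_2,x_4)=\min\{w(x_{\sigma(1)},x_{\sigma(2)})+w(x_{\sigma(3)},x_{\sigma(4)}):\sigma\text{ a permutation of }\{1,2,3,4\}\},$ i.e. $w$ is well-ordering on $[0,\infty)$.
   Context: Well-ordering on a set $J\subset\mathbb R$ means exactly the displayed identity for all $x_1\le x_2\le x_3\le x_4$ in $J$ (for a symmetric continuous interaction). *)

theory Defs
  imports "HOL-Analysis.Analysis" "HOL-Library.Extended_Real" "HOL-Combinatorics.Permutations"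
begin

definition ext_convex_on :: "real set \<Rightarrow> (real \<Rightarrow> ereal) \<Rightarrow> bool" where
  "ext_convex_on S g \<longleftrightarrow>
     (\<forall>x\<in>S. \<forall>y\<in>S. \<forall>u::real. 0 < u \<and> u < 1 \<longrightarrow>
        g ((1 - u) * x + u * y) \<le> ereal (1 - u) * g x + ereal u * g y)"

definition wfun :: "(real \<Rightarrow> real) \<Rightarrow> (real \<Rightarrow> ereal) \<Rightarrow> real \<Rightarrow> real \<Rightarrow> ereal" where
  "wfun f g x y = g (sqrt ((x - y)^2 + (f x - f y)^2))"

end

theory Submission
  imports Defs
begin


lemma conv3:
  fixes f :: "real \<Rightarrow> real"
  assumes "convex_on {0..} f" "0 \<le> p" "p \<le> q" "q \<le> r"
  shows "(q - p) * (f q - f r) \<le> (r - q) * (f p - f q)"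
proof (cases "p < r")
  case True
  have c: "convex_on {p..r} f" using assms(2) by (intro convex_on_subset[OF assms(1)]) auto
  have "f q \<le> (f r - f p) / (r - p) * (q - p) + f p"
    using convex_onD_Icc'[OF c, of q] assms by auto
  then have "(r - p) * f q \<le> (r - p) * ((f r - f p) / (r - p) * (q - p) + f p)"
    using True by (intro mult_left_mono) auto
  also have "\<dots> = (f r - f p) * (q - p) + (r - p) * f p" using True by (simp add: field_simps)
  finally show ?thesis by (simp add: algebra_simps)
next
  case False
  then have "p = q" "q = r" using assms by auto
  then show ?thesis by simp
qed

lemma sqrt_add_par:
  fixes p1 p2 q1 q2 :: real
  assumes "p1 * q2 = p2 * q1" "0 \<le> p1 * q1 + p2 * q2"
  shows "sqrt ((p1+q1)^2 + (p2+q2)^2) = sqrt (p1^2+p2^2) + sqrt (q1^2+q2^2)"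
proof (rule real_sqrt_unique)
  have "(p1^2+p2^2) * (q1^2+q2^2) = (p1*q1+p2*q2)^2 + (p1*q2 - p2*q1)^2"
    by (simp add: power2_eq_square algebra_simps)
  then have e: "(p1^2+p2^2) * (q1^2+q2^2) = (p1*q1+p2*q2)^2" using assms by simp
  have "sqrt (p1^2+p2^2) * sqrt (q1^2+q2^2) = p1*q1+p2*q2"
    by (metis e assms(2) real_sqrt_abs real_sqrt_mult abs_of_nonneg)
  moreover have "(sqrt (p1^2+p2^2) + sqrt (q1^2+q2^2))^2 = (p1^2+p2^2) + (q1^2+q2^2) + 2 * (sqrt (p1^2+p2^2) * sqrt (q1^2+q2^2))"
    by (simp add: power2_eq_square algebra_simps)
  ultimately show "(sqrt (p1^2+p2^2) + sqrt (q1^2+q2^2))^2 = (p1+q1)^2 + (p2+q2)^2"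
    by (simp add: power2_eq_square algebra_simps)
  show "0 \<le> sqrt (p1^2+p2^2) + sqrt (q1^2+q2^2)" by simp
qed

lemma quad:
  fixes a1 a2 a3 b1 b2 b3 :: real
  assumes nn: "0 \<le> a1" "0 \<le> a2" "0 \<le> a3" "0 \<le> b1" "0 \<le> b2" "0 \<le> b3"
    and c12: "a1*b2 \<le> a2*b1" and c23: "a2*b3 \<le> a3*b2" and c13: "a1*b3 \<le> a3*b1"
  shows "sqrt((a1+a2+a3)^2+(b1+b2+b3)^2) + sqrt(a2^2+b2^2)
     \<le> sqrt((a1+a2)^2+(b1+b2)^2) + sqrt((a2+a3)^2+(b2+b3)^2)"
proof -
  define C12 where "C12 = a2*b1 - a1*b2"
  define C13 where "C13 = a3*b1 - a1*b3"
  define C23 where "C23 = a3*b2 - a2*b3"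
  define K where "K = C12 + C13 + C23"
  have C: "C12 \<ge> 0" "C13 \<ge> 0" "C23 \<ge> 0" using c12 c13 c23 by (auto simp: C12_def C13_def C23_def)
  show ?thesis
  proof (cases "K = 0")
    case True
    then have z: "C12 = 0" "C13 = 0" "C23 = 0" using C K_def by auto
    have e1: "sqrt((a1+a2)^2+(b1+b2)^2) = sqrt(a1^2+b1^2) + sqrt(a2^2+b2^2)"
      by (rule sqrt_add_par) (use z nn in \<open>auto simp: C12_def algebra_simps\<close>)
    have e2: "sqrt((a2+a3)^2+(b2+b3)^2) = sqrt(a2^2+b2^2) + sqrt(a3^2+b3^2)"
      by (rule sqrt_add_par) (use z nn in \<open>auto simp: C23_def algebra_simps\<close>)
    have e3: "sqrt(((a1+a2)+a3)^2+((b1+b2)+b3)^2) = sqrt((a1+a2)^2+(b1+b2)^2) + sqrt(a3^2+b3^2)"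
      by (rule sqrt_add_par) (use z nn in \<open>auto simp: C13_def C23_def algebra_simps\<close>)
    show ?thesis using e1 e2 e3 by simp
  next
    case False
    then have Kp: "K > 0" using C K_def by auto
    define s where "s = (C12 + C13) / K"
    define t where "t = C12 / K"
    have s01: "0 \<le> s" "s \<le> 1" using C Kp by (auto simp: s_def K_def field_simps)
    have t01: "0 \<le> t" "t \<le> 1" using C Kp by (auto simp: t_def K_def field_simps)
    define U where "U = Complex (a1+a2) (b1+b2)"
    define W where "W = Complex (a2+a3) (b2+b3)"
    have n1: "(C12+C13)*(a1+a2) - C12*(a2+a3) = a1*K"
      unfolding K_def C12_def C13_def C23_def by (simp add: algebra_simps)
    have n2: "(C12+C13)*(b1+b2) - C12*(b2+b3) = b1*K"
      unfolding K_def C12_def C13_def C23_def by (simp add: algebra_simps)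
    have r1: "s * (a1+a2) - t * (a2+a3) = a1"
    proof -
      have "s * (a1+a2) - t * (a2+a3) = ((C12+C13)*(a1+a2) - C12*(a2+a3)) / K"
        using Kp unfolding s_def t_def by (simp add: field_simps)
      then show ?thesis using n1 Kp by simp
    qed
    have r2: "s * (b1+b2) - t * (b2+b3) = b1"
    proof -
      have "s * (b1+b2) - t * (b2+b3) = ((C12+C13)*(b1+b2) - C12*(b2+b3)) / K"
        using Kp unfolding s_def t_def by (simp add: field_simps)
      then show ?thesis using n2 Kp by simp
    qed
    have E1: "Complex (a1+a2+a3) (b1+b2+b3) = s *\<^sub>R U + (1 - t) *\<^sub>R W"
      using r1 r2 by (simp add: U_def W_def complex_eq_iff algebra_simps scaleR_conv_of_real)
    have E2: "Complex a2 b2 = (1 - s) *\<^sub>R U + t *\<^sub>R W"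
      using r1 r2 by (simp add: U_def W_def complex_eq_iff algebra_simps scaleR_conv_of_real)
    have "norm (Complex (a1+a2+a3) (b1+b2+b3)) \<le> s * norm U + (1 - t) * norm W"
      unfolding E1 using norm_triangle_ineq[of "s *\<^sub>R U" "(1-t) *\<^sub>R W"] s01 t01 by simp
    moreover have "norm (Complex a2 b2) \<le> (1 - s) * norm U + t * norm W"
      unfolding E2 using norm_triangle_ineq[of "(1-s) *\<^sub>R U" "t *\<^sub>R W"] s01 t01 by simp
    ultimately have "norm (Complex (a1+a2+a3) (b1+b2+b3)) + norm (Complex a2 b2) \<le> norm U + norm W"
      by (simp add: algebra_simps)
    then show ?thesis by (simp add: U_def W_def complex_norm)
  qed
qed

lemma g_maj:
  fixes g :: "real \<Rightarrow> ereal"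
  assumes g_vals: "\<And>t. 0 \<le> t \<Longrightarrow> g t \<noteq> -\<infinity>"
    and g_convex: "ext_convex_on {0..} g"
    and g_noninc: "\<And>s t. 0 \<le> s \<Longrightarrow> s \<le> t \<Longrightarrow> g t \<le> g s"
    and h: "0 \<le> a" "a \<le> b" "b \<le> d" "a \<le> c" "c \<le> d" "a + d \<le> b + c"
  shows "g b + g c \<le> g a + g d"
proof -
  have conv: "\<And>x y v. 0 \<le> x \<Longrightarrow> 0 \<le> y \<Longrightarrow> 0 < v \<Longrightarrow> v < 1 \<Longrightarrow>
      g ((1 - v) * x + v * y) \<le> ereal (1 - v) * g x + ereal v * g y"
    using g_convex unfolding ext_convex_on_def by auto
  define c' where "c' = a + d - b"
  have c': "a \<le> c'" "c' \<le> d" "c' \<le> c" using h by (auto simp: c'_def)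
  have gc: "g c \<le> g c'" using g_noninc c' h by auto
  have main: "g b + g c' \<le> g a + g d"
  proof (cases "b = a \<or> b = d")
    case True
    then show ?thesis by (auto simp: c'_def add.commute)
  next
    case False
    then have ab: "a < b" "b < d" using h by auto
    show ?thesis
    proof (cases "g a = \<infinity> \<or> g d = \<infinity>")
      case True
      then show ?thesis using g_vals[of a] g_vals[of d] h by auto
    next
      case False
      then obtain A D where AD: "g a = ereal A" "g d = ereal D"
        using g_vals[of a] g_vals[of d] h by (cases "g a"; cases "g d") auto
      define u where "u = (b - a) / (d - a)"
      have u: "0 < u" "u < 1" using ab by (auto simp: u_def field_simps)
      have ud: "u * (d - a) = b - a" using ab by (simp add: u_def)
      have eb: "(1 - u) * a + u * d = b"
      proof -
        have "(1 - u) * a + u * d = a + u * (d - a)" by (simp add: algebra_simps)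
        then show ?thesis using ud by simp
      qed
      have ec: "(1 - (1 - u)) * a + (1 - u) * d = c'"
      proof -
        have "(1 - (1 - u)) * a + (1 - u) * d = d - u * (d - a)" by (simp add: algebra_simps)
        then show ?thesis using ud by (simp add: c'_def)
      qed
      have "g b \<le> ereal (1 - u) * g a + ereal u * g d"
        using conv[of a d u] h u eb by simp
      then have gb: "g b \<le> ereal ((1 - u) * A + u * D)" by (simp add: AD)
      have "g c' \<le> ereal (1 - (1 - u)) * g a + ereal (1 - u) * g d"
        using conv[of a d "1 - u"] h u ec by simp
      then have gc': "g c' \<le> ereal (u * A + (1 - u) * D)" by (simp add: AD)
      obtain B where B: "g b = ereal B" using g_vals[of b] gb h by (cases "g b") auto
      obtain C where C: "g c' = ereal C" using g_vals[of c'] gc' h c' by (cases "g c'") auto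
      have "B + C \<le> A + D" using gb gc' B C by (simp add: algebra_simps)
      then show ?thesis using B C AD by simp
    qed
  qed
  have "g b + g c \<le> g b + g c'" using gc by (rule add_left_mono)
  also note main
  finally show ?thesis .
qed



lemma dmono:
  fixes p q r s :: real
  assumes "\<bar>p\<bar> \<le> \<bar>q\<bar>" "\<bar>r\<bar> \<le> \<bar>s\<bar>"
  shows "sqrt (p^2 + r^2) \<le> sqrt (q^2 + s^2)"
proof -
  have "p^2 \<le> q^2" "r^2 \<le> s^2" using assms abs_le_square_iff by auto
  then show ?thesis by simp
qed

lemma quad_xy:
  fixes x1 x2 x3 x4 y1 y2 y3 y4 :: real
  assumes "x1 \<le> x2" "x2 \<le> x3" "x3 \<le> x4" "y2 \<le> y1" "y3 \<le> y2" "y4 \<le> y3"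
    "(x2-x1)*(y3-y4) \<le> (x4-x3)*(y1-y2)"
    "(x2-x1)*(y2-y3) \<le> (x3-x2)*(y1-y2)"
    "(x3-x2)*(y3-y4) \<le> (x4-x3)*(y2-y3)"
  shows "sqrt ((x1-x4)^2 + (y1-y4)^2) + sqrt ((x2-x3)^2 + (y2-y3)^2)
     \<le> sqrt ((x1-x3)^2 + (y1-y3)^2) + sqrt ((x2-x4)^2 + (y2-y4)^2)"
proof -
  have q: "sqrt((x2-x1+(x3-x2)+(x4-x3))^2+(y1-y2+(y2-y3)+(y3-y4))^2) + sqrt((x3-x2)^2+(y2-y3)^2)
     \<le> sqrt((x2-x1+(x3-x2))^2+(y1-y2+(y2-y3))^2) + sqrt((x3-x2+(x4-x3))^2+(y2-y3+(y3-y4))^2)"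
    by (rule quad) (use assms in auto)
  have e: "(x2-x1+(x3-x2)+(x4-x3))^2 = (x1-x4)^2" "(y1-y2+(y2-y3)+(y3-y4))^2 = (y1-y4)^2"
    "(x3-x2)^2 = (x2-x3)^2" "(x2-x1+(x3-x2))^2 = (x1-x3)^2" "(y1-y2+(y2-y3))^2 = (y1-y3)^2"
    "(x3-x2+(x4-x3))^2 = (x2-x4)^2" "(y2-y3+(y3-y4))^2 = (y2-y4)^2"
    by (simp_all add: power2_eq_square algebra_simps)
  show ?thesis using q unfolding e .
qed

theorem mainTheorem19:
  fixes f :: "real \<Rightarrow> real" and g :: "real \<Rightarrow> ereal" and x :: "nat \<Rightarrow> real"
  assumes f_convex: "convex_on {0..} f"
    and f_noninc: "\<And>s t. 0 \<le> s \<Longrightarrow> s \<le> t \<Longrightarrow> f t \<le> f s"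
    and g_vals: "\<And>t. 0 \<le> t \<Longrightarrow> g t \<noteq> -\<infinity>"
    and g_convex: "ext_convex_on {0..} g"
    and g_noninc: "\<And>s t. 0 \<le> s \<Longrightarrow> s \<le> t \<Longrightarrow> g t \<le> g s"
    and x_nonneg: "0 \<le> x 1"
    and x_ord: "x 1 \<le> x 2" "x 2 \<le> x 3" "x 3 \<le> x 4"
  shows "wfun f g (x 1) (x 3) + wfun f g (x 2) (x 4) =
         Min {wfun f g (x (\<sigma> 1)) (x (\<sigma> 2)) + wfun f g (x (\<sigma> 3)) (x (\<sigma> 4)) | \<sigma>.
              \<sigma> permutes {1..4}}"
proof -
  define D where "D = (\<lambda>i j. sqrt ((x i - x j)^2 + (f (x i) - f (x j))^2))"
  define W where "W = (\<lambda>i j. wfun f g (x i) (x j))"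
  have WD: "W i j = g (D i j)" for i j by (simp add: W_def D_def wfun_def)
  have Dnn: "0 \<le> D i j" for i j by (simp add: D_def)
  have Dsym: "D i j = D j i" for i j by (simp add: D_def power2_commute)
  have xnn: "0 \<le> x 2" "0 \<le> x 3" "0 \<le> x 4" using x_nonneg x_ord by auto
  have fd: "f (x 2) \<le> f (x 1)" "f (x 3) \<le> f (x 2)" "f (x 4) \<le> f (x 3)"
    using f_noninc x_nonneg xnn x_ord by auto
  have d1: "D 1 2 \<le> D 1 3" "D 3 4 \<le> D 2 4" "D 2 3 \<le> D 1 3" "D 2 3 \<le> D 2 4"
    "D 1 3 \<le> D 1 4" "D 2 4 \<le> D 1 4"
    unfolding D_def using x_ord fd by (auto intro!: dmono simp del: real_sqrt_le_iff)
  have c12: "(x 2 - x 1)*(f (x 2) - f (x 3)) \<le> (x 3 - x 2)*(f (x 1) - f (x 2))"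
    using conv3[OF f_convex x_nonneg x_ord(1,2)] .
  have c23: "(x 3 - x 2)*(f (x 3) - f (x 4)) \<le> (x 4 - x 3)*(f (x 2) - f (x 3))"
    using conv3[OF f_convex xnn(1) x_ord(2,3)] .
  have c13: "(x 2 - x 1)*(f (x 3) - f (x 4)) \<le> (x 4 - x 3)*(f (x 1) - f (x 2))"
  proof (cases "x 2 = x 3")
    case True
    have "x 2 \<le> x 4" using x_ord by auto
    from conv3[OF f_convex x_nonneg x_ord(1) this] show ?thesis using True by simp
  next
    case False
    then have a2: "0 < x 3 - x 2" using x_ord by auto
    have "(x 2 - x 1) * ((x 3 - x 2)*(f (x 3) - f (x 4))) \<le> (x 2 - x 1) * ((x 4 - x 3)*(f (x 2) - f (x 3)))"
      using c23 x_ord by (intro mult_left_mono) auto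
    moreover have "(x 4 - x 3) * ((x 2 - x 1)*(f (x 2) - f (x 3))) \<le> (x 4 - x 3) * ((x 3 - x 2)*(f (x 1) - f (x 2)))"
      using c12 x_ord by (intro mult_left_mono) auto
    ultimately have "(x 3 - x 2) * ((x 2 - x 1)*(f (x 3) - f (x 4))) \<le> (x 3 - x 2) * ((x 4 - x 3)*(f (x 1) - f (x 2)))"
      by (simp add: algebra_simps)
    then show ?thesis using a2 by simp
  qed
  have dq: "D 1 4 + D 2 3 \<le> D 1 3 + D 2 4"
    unfolding D_def by (rule quad_xy) (use x_ord fd c12 c23 c13 in auto)
  have P12: "W 1 3 + W 2 4 \<le> W 1 2 + W 3 4"
    unfolding WD using g_noninc Dnn d1 by (intro add_mono) auto
  have P14: "W 1 3 + W 2 4 \<le> W 1 4 + W 2 3"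
  proof -
    have "g (D 1 3) + g (D 2 4) \<le> g (D 2 3) + g (D 1 4)"
      by (rule g_maj[OF g_vals g_convex g_noninc]) (use Dnn d1 dq in auto)
    then show ?thesis unfolding WD by (simp add: add.commute)
  qed
  let ?S = "{W (\<sigma> 1) (\<sigma> 2) + W (\<sigma> 3) (\<sigma> 4) | \<sigma>. \<sigma> permutes {1..(4::nat)}}"
  have fin: "finite ?S"
  proof -
    have "?S = (\<lambda>\<sigma>. W (\<sigma> 1) (\<sigma> 2) + W (\<sigma> 3) (\<sigma> 4)) ` {\<sigma>. \<sigma> permutes {1..(4::nat)}}" by auto
    then show ?thesis using finite_permutations[of "{1..(4::nat)}"] by simp
  qed
  have mem: "W 1 3 + W 2 4 \<in> ?S"
  proof -
    have "Transposition.transpose 2 3 permutes {1..(4::nat)}" by (rule permutes_swap_id) auto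
    moreover have "W (Transposition.transpose 2 3 1) (Transposition.transpose 2 3 2) + W (Transposition.transpose 2 3 3) (Transposition.transpose 2 3 (4::nat)) = W 1 3 + W 2 4"
      by simp
    ultimately show ?thesis
      by (intro CollectI exI[where x="Transposition.transpose 2 3"]) (simp only: conj_commute)
  qed
  have Wsym: "W i j = W j i" for i j by (simp add: WD Dsym)
  have low: "W 1 3 + W 2 4 \<le> z" if zS: "z \<in> ?S" for z
  proof -
    obtain \<sigma> where s: "\<sigma> permutes {1..(4::nat)}" and z: "z = W (\<sigma> 1) (\<sigma> 2) + W (\<sigma> 3) (\<sigma> 4)"
      using zS by blast
    have r: "1 \<le> \<sigma> i \<and> \<sigma> i \<le> 4" if "1 \<le> i" "i \<le> 4" for i
      using permutes_in_image[OF s, of i] that by simp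
    have inj: "\<sigma> i \<noteq> \<sigma> j" if "i \<noteq> j" for i j
      using permutes_inj[OF s] that unfolding inj_def by blast
    have sy: "W 2 1 = W 1 2" "W 3 1 = W 1 3" "W 4 1 = W 1 4" "W 3 2 = W 2 3" "W 4 2 = W 2 4" "W 4 3 = W 3 4"
      by (rule Wsym)+
    have Ps: "W 1 3 + W 2 4 \<le> W 3 4 + W 1 2" "W 1 3 + W 2 4 \<le> W 2 3 + W 1 4"
      "W 1 3 + W 2 4 \<le> W 1 3 + W 2 4" "W 1 3 + W 2 4 \<le> W 2 4 + W 1 3"
      using P12 P14 by (simp_all add: add.commute)
    have A: "\<sigma> 1 = 1 \<or> \<sigma> 1 = 2 \<or> \<sigma> 1 = 3 \<or> \<sigma> 1 = 4"
      "\<sigma> 2 = 1 \<or> \<sigma> 2 = 2 \<or> \<sigma> 2 = 3 \<or> \<sigma> 2 = 4"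
      "\<sigma> 3 = 1 \<or> \<sigma> 3 = 2 \<or> \<sigma> 3 = 3 \<or> \<sigma> 3 = 4"
      "\<sigma> 4 = 1 \<or> \<sigma> 4 = 2 \<or> \<sigma> 4 = 3 \<or> \<sigma> 4 = 4"
      using r[of 1] r[of 2] r[of 3] r[of 4] by linarith+
    have N: "\<sigma> 1 \<noteq> \<sigma> 2" "\<sigma> 1 \<noteq> \<sigma> 3" "\<sigma> 1 \<noteq> \<sigma> 4" "\<sigma> 2 \<noteq> \<sigma> 3" "\<sigma> 2 \<noteq> \<sigma> 4" "\<sigma> 3 \<noteq> \<sigma> 4"
      by (simp_all add: inj)
    show ?thesis unfolding z
      using A N apply -
      apply (elim disjE)
      apply (simp_all add: sy Ps P12 P14 sy[unfolded One_nat_def] Ps[unfolded One_nat_def] P12[unfolded One_nat_def] P14[unfolded One_nat_def])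
      done
  qed
  have "Min ?S = W 1 3 + W 2 4"
    by (rule Min_eqI[OF fin low mem])
  then show ?thesis by (simp add: W_def)
qed
end
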